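(* Let $\mathcal S$ be a convex Sawtooth model with $n$ upper particles, let $1\le s\le n$ and $t\in[0,1]$. Then $y\mapsto F_{X_s\mid Y_s=y}(t)$ is nonincreasing and $x\mapsto F_{Y_s\mid X_{s+1}=x}(t)$ is nonincreasing. Moreover, for all $y,x$, $$F_{X_s\mid Y_s=y}(t)\ \ge\ F^{\mathcal S_{\to X_s}}_{X_s}(t)\qquad\text{and}\qquad F_{Y_s\mid X_{s+1}=x}(t)\ \le\ F^{\mathcal S_{\to Y_s}}_{Y_s}(t).$$
   Context: A (type $--$) Sawtooth model with $n\ge1$ upper particles is specified by functions $f_1,g_1,\dots,f_n,g_n:[0,1]\to[0,\infty)$, each nondecreasing, $C^1$ and not identically zero. It is the probability space $[0,1]^{n+1}\times[0,1]^n$ with probability density at $(x_1,\dots,x_{n+1},y_1,\dots,y_n)$ equal to $\frac{1}{\mathcal V}\prod_{i=1}^n\mathbf 1_{\{x_i\le y_i\}}\mathbf 1_{\{x_{i+1}\le y_i\}}f_i(y_i-x_i)\,g_i(y_i-x_{i+1})$, $\mathcal V$ being the normalizing constant. The coordinates $X_1,\dots,X_{n+1}$ are the lower particles and $Y_1,\dots,Y_n$ the upper particles (ordered $X_1,Y_1,X_2,\dots,Y_n,X_{n+1}$). The model is convex if every $f_i,g_i$ is positive on $(0,1]$ and log-concave, i.e. $f_i'/f_i$ and $g_i'/g_i$ are nonincreasing. Conditional cumulative distribution functions $F_{U\mid V=v}(t)=\mathbb P(U\le t\mid V=v)$ are computed from the joint density. For a particle $P$, $\mathcal S_{\to P}$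 is the model obtained by keeping only the particles from $X_1$ up to $P$ and the interaction factors among them (if $P=Y_s$ the last factor is $f_s(y_s-x_s)$); $F^{\mathcal S_{\to P}}_U$ is the cumulative distribution function of particle $U$ in $\mathcal S_{\to P}$. *)

theory Defs
  imports "HOL-Analysis.Analysis"
begin

text \<open>Positions of a configuration are stored in p :: nat => real in the order
  X_1, Y_1, X_2, ..., Y_n, X_(n+1): X_i is coordinate 2i-2, Y_i is coordinate 2i-1
  (for i >= 1).\<close>

definition xidx :: "nat \<Rightarrow> nat" where "xidx i = 2 * i - 2"
definition yidx :: "nat \<Rightarrow> nat" where "yidx i = 2 * i - 1"

definition saw_fun :: "(real \<Rightarrow> real) \<Rightarrow> bool" where
  "saw_fun \<phi> \<longleftrightarrow>
     mono_on {0..1} \<phi> \<and> (\<forall>x\<in>{0..1}. 0 \<le> \<phi> x) \<and> (\<exists>x\<in>{0..1}. \<phi> x \<noteq> 0) \<and>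
     (\<forall>x\<in>{0..1}. \<phi> differentiable (at x within {0..1})) \<and>
     continuous_on {0..1} (\<lambda>x. vector_derivative \<phi> (at x within {0..1}))"

text \<open>Convexity condition: positive on (0,1] and log-concave (phi'/phi nonincreasing).\<close>
definition convex_fun :: "(real \<Rightarrow> real) \<Rightarrow> bool" where
  "convex_fun \<phi> \<longleftrightarrow>
     (\<forall>x\<in>{0<..1}. 0 < \<phi> x) \<and>
     (\<forall>x\<in>{0<..1}. \<forall>y\<in>{0<..1}. x \<le> y \<longrightarrow>
        vector_derivative \<phi> (at y within {0..1}) / \<phi> y
          \<le> vector_derivative \<phi> (at x within {0..1}) / \<phi> x)"

definition saw_factor :: "(nat \<Rightarrow> real \<Rightarrow> real) \<Rightarrow> (nat \<Rightarrow> real \<Rightarrow> real) \<Rightarrow> nat \<Rightarrow> (nat \<Rightarrow> real) \<Rightarrow> real" where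
  "saw_factor f g i p =
     (if p (xidx i) \<le> p (yidx i) \<and> p (xidx (Suc i)) \<le> p (yidx i)
      then f i (p (yidx i) - p (xidx i)) * g i (p (yidx i) - p (xidx (Suc i))) else 0)"

definition saw_weight :: "nat \<Rightarrow> (nat \<Rightarrow> real \<Rightarrow> real) \<Rightarrow> (nat \<Rightarrow> real \<Rightarrow> real) \<Rightarrow> (nat \<Rightarrow> real) \<Rightarrow> real" where
  "saw_weight n f g p = (\<Prod>i\<in>{1..n}. saw_factor f g i p)"

text \<open>Unnormalised density of S_{->X_s} (coordinates 0..2s-2).\<close>
definition trunc_weight_X :: "nat \<Rightarrow> (nat \<Rightarrow> real \<Rightarrow> real) \<Rightarrow> (nat \<Rightarrow> real \<Rightarrow> real) \<Rightarrow> (nat \<Rightarrow> real) \<Rightarrow> real" where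
  "trunc_weight_X s f g p = (\<Prod>i\<in>{1..<s}. saw_factor f g i p)"

text \<open>Unnormalised density of S_{->Y_s} (coordinates 0..2s-1); last factor f_s(y_s-x_s).\<close>
definition trunc_weight_Y :: "nat \<Rightarrow> (nat \<Rightarrow> real \<Rightarrow> real) \<Rightarrow> (nat \<Rightarrow> real \<Rightarrow> real) \<Rightarrow> (nat \<Rightarrow> real) \<Rightarrow> real" where
  "trunc_weight_Y s f g p = (\<Prod>i\<in>{1..<s}. saw_factor f g i p) *
     (if p (xidx s) \<le> p (yidx s) then f s (p (yidx s) - p (xidx s)) else 0)"

definition cube :: "nat set \<Rightarrow> (nat \<Rightarrow> real) measure" where
  "cube I = PiM I (\<lambda>_. restrict_space lborel {0..1::real})"

definition model_cdf :: "nat \<Rightarrow> ((nat \<Rightarrow> real) \<Rightarrow> real) \<Rightarrow> nat \<Rightarrow> real \<Rightarrow> real" where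
  "model_cdf N w k t =
     (\<integral>p. (if p k \<le> t then w p else 0) \<partial>cube {..N}) / (\<integral>p. w p \<partial>cube {..N})"

definition marg_dens :: "nat \<Rightarrow> ((nat \<Rightarrow> real) \<Rightarrow> real) \<Rightarrow> nat \<Rightarrow> real \<Rightarrow> real" where
  "marg_dens N w v b = (\<integral>q. w (q(v := b)) \<partial>cube ({..N} - {v}))"

definition cond_cdf :: "nat \<Rightarrow> ((nat \<Rightarrow> real) \<Rightarrow> real) \<Rightarrow> nat \<Rightarrow> nat \<Rightarrow> real \<Rightarrow> real \<Rightarrow> real" where
  "cond_cdf N w u v t b =
     (\<integral>q. (if q u \<le> t then w (q(v := b)) else 0) \<partial>cube ({..N} - {v})) / marg_dens N w v b"

end

theory Submission
  imports Defs "HOL-Probability.Probability"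
begin
lemma unif_prob: "prob_space (restrict_space lborel {0..1::real})"
  by (rule prob_space_restrict_space) auto
lemma cube_prob: "prob_space (cube I)"
  unfolding cube_def by (rule prob_space_PiM) (rule unif_prob)
lemma psf: "product_sigma_finite (\<lambda>_. restrict_space lborel {0..1::real})"
  unfolding product_sigma_finite_def using unif_prob prob_space_imp_sigma_finite by blast
lemma space_cube: "space (cube I) = PiE I (\<lambda>_. {0..1})"
  unfolding cube_def by (simp add: space_PiM space_restrict_space)

lemma saw_cont: "saw_fun \<phi> \<Longrightarrow> continuous_on {0..1} \<phi>"
  unfolding saw_fun_def continuous_on_eq_continuous_within
  using differentiable_imp_continuous_within by blast

lemma coord_meas: "j \<in> I \<Longrightarrow> (\<lambda>p. p j) \<in> borel_measurable (cube I)"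
  unfolding cube_def
  by (rule measurable_compose[OF measurable_component_singleton]) (auto intro: measurable_restrict_space1)

lemma coordu_meas: "j \<in> I \<union> {v} \<Longrightarrow> (\<lambda>p. (p(v:=c)) j) \<in> borel_measurable (cube I)"
  by (cases "j = v") (auto intro: coord_meas)

lemma coordu_range: "p \<in> space (cube I) \<Longrightarrow> j \<in> I \<union> {v} \<Longrightarrow> c \<in> {0..1} \<Longrightarrow> (p(v:=c)) j \<in> {0..1}"
  by (cases "j = v") (auto simp: space_cube PiE_def Pi_def)

definition clampf :: "(real \<Rightarrow> real) \<Rightarrow> real \<Rightarrow> real" where
  "clampf \<phi> z = \<phi> (max 0 (min 1 z))"

lemma clampf_meas: "saw_fun \<phi> \<Longrightarrow> clampf \<phi> \<in> borel_measurable borel"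
proof -
  assume "saw_fun \<phi>"
  then have "continuous_on {0..1} \<phi>" by (rule saw_cont)
  moreover have "continuous_on UNIV (\<lambda>z::real. max 0 (min 1 z))" by (intro continuous_intros)
  ultimately have "continuous_on UNIV (\<lambda>z. \<phi> (max 0 (min 1 z)))"
    by (rule continuous_on_compose2) auto
  then show ?thesis unfolding clampf_def by (rule borel_measurable_continuous_onI)
qed

lemma clampf_eq: "z \<in> {0..1} \<Longrightarrow> clampf \<phi> z = \<phi> z"
  by (auto simp: clampf_def)

definition good :: "nat set \<Rightarrow> ((nat \<Rightarrow> real) \<Rightarrow> real) \<Rightarrow> bool" where
  "good I h \<longleftrightarrow> h \<in> borel_measurable (cube I) \<and> (\<exists>B. \<forall>p\<in>space (cube I). 0 \<le> h p \<and> h p \<le> B)"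

lemma good_mult: "good I h1 \<Longrightarrow> good I h2 \<Longrightarrow> good I (\<lambda>p. h1 p * h2 p)"
  unfolding good_def
proof (elim conjE exE, intro conjI)
  fix B1 B2 assume h1: "h1 \<in> borel_measurable (cube I)" and h2: "h2 \<in> borel_measurable (cube I)"
    and b1: "\<forall>p\<in>space (cube I). 0 \<le> h1 p \<and> h1 p \<le> B1"
    and b2: "\<forall>p\<in>space (cube I). 0 \<le> h2 p \<and> h2 p \<le> B2"
  show "(\<lambda>p. h1 p * h2 p) \<in> borel_measurable (cube I)" using h1 h2 by measurable
  show "\<exists>B. \<forall>p\<in>space (cube I). 0 \<le> h1 p * h2 p \<and> h1 p * h2 p \<le> B"
  proof (intro exI[of _ "B1*B2"] ballI)
    fix p assume p: "p \<in> space (cube I)"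
    then have "0 \<le> h1 p" "h1 p \<le> B1" "0 \<le> h2 p" "h2 p \<le> B2" using b1 b2 by auto
    then show "0 \<le> h1 p * h2 p \<and> h1 p * h2 p \<le> B1 * B2" by (auto intro: mult_mono)
  qed
qed

lemma good_const: "0 \<le> c \<Longrightarrow> good I (\<lambda>_. c)"
  unfolding good_def by auto

lemma good_prod: "finite S \<Longrightarrow> (\<And>i. i \<in> S \<Longrightarrow> good I (h i)) \<Longrightarrow> good I (\<lambda>p. \<Prod>i\<in>S. h i p)"
proof (induction S rule: finite_induct)
  case empty then show ?case by (simp add: good_const)
next
  case (insert x F) then show ?case by (simp add: good_mult)
qed

lemma good_if: "good I h \<Longrightarrow> {p \<in> space (cube I). P p} \<in> sets (cube I) \<Longrightarrow> good I (\<lambda>p. if P p then h p else 0)"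
  unfolding good_def
proof (elim conjE exE, intro conjI)
  fix B assume h: "h \<in> borel_measurable (cube I)" and P: "{p \<in> space (cube I). P p} \<in> sets (cube I)"
    and b: "\<forall>p\<in>space (cube I). 0 \<le> h p \<and> h p \<le> B"
  show "(\<lambda>p. if P p then h p else 0) \<in> borel_measurable (cube I)"
    by (rule measurable_If[OF h _ P]) simp
  show "\<exists>B. \<forall>p\<in>space (cube I). 0 \<le> (if P p then h p else 0) \<and> (if P p then h p else 0) \<le> B"
    using b by (intro exI[of _ B]) auto
qed

lemma good_cong: "good I h \<Longrightarrow> (\<And>p. p \<in> space (cube I) \<Longrightarrow> h p = h' p) \<Longrightarrow> good I h'"
  unfolding good_def
  by (metis (no_types, lifting) measurable_cong)

lemma good_integrable: "good I h \<Longrightarrow> integrable (cube I) h"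
proof -
  assume "good I h"
  then obtain B where m: "h \<in> borel_measurable (cube I)" and b: "\<forall>p\<in>space (cube I). 0 \<le> h p \<and> h p \<le> B"
    unfolding good_def by auto
  interpret prob_space "cube I" unfolding cube_def
    by (rule prob_space_PiM) (rule prob_space_restrict_space, auto)
  show ?thesis by (rule integrable_const_bound[where B=B]) (use m b in auto)
qed

lemma good_nonneg: "good I h \<Longrightarrow> 0 \<le> integral\<^sup>L (cube I) h"
  unfolding good_def by (auto intro!: integral_nonneg)

lemma le_sets: "i \<in> I \<union> {v} \<Longrightarrow> j \<in> I \<union> {v} \<Longrightarrow> {p \<in> space (cube I). (p(v:=c)) i \<le> (p(v:=c)) j} \<in> sets (cube I)"
  using coordu_meas[of i I v c] coordu_meas[of j I v c] by measurable

lemma factor_good: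
  assumes sf: "saw_fun (f i)" "saw_fun (g i)"
    and idx: "xidx i \<in> I \<union> {v}" "yidx i \<in> I \<union> {v}" "xidx (Suc i) \<in> I \<union> {v}" and c: "c \<in> {0..1}"
  shows "good I (\<lambda>p. saw_factor f g i (p(v:=c)))"
proof -
  let ?e = "\<lambda>j p. (p(v:=c)) j"
  define H where "H = (\<lambda>p. if ?e (xidx i) p \<le> ?e (yidx i) p \<and> ?e (xidx (Suc i)) p \<le> ?e (yidx i) p
     then clampf (f i) (?e (yidx i) p - ?e (xidx i) p) * clampf (g i) (?e (yidx i) p - ?e (xidx (Suc i)) p) else 0)"
  have mono: "\<phi> x \<le> \<phi> y" "0 \<le> \<phi> x" if "saw_fun \<phi>" "0 \<le> x" "x \<le> y" "y \<le> 1" for \<phi> x y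
    using that unfolding saw_fun_def mono_on_def by auto
  have "good I H"
    unfolding H_def
  proof (rule good_if)
    have m1: "(\<lambda>p. clampf (f i) (?e (yidx i) p - ?e (xidx i) p)) \<in> borel_measurable (cube I)"
      using clampf_meas[OF sf(1)] coordu_meas[OF idx(1), of c] coordu_meas[OF idx(2), of c] by measurable
    have m2: "(\<lambda>p. clampf (g i) (?e (yidx i) p - ?e (xidx (Suc i)) p)) \<in> borel_measurable (cube I)"
      using clampf_meas[OF sf(2)] coordu_meas[OF idx(3), of c] coordu_meas[OF idx(2), of c] by measurable
    show "good I (\<lambda>p. clampf (f i) (?e (yidx i) p - ?e (xidx i) p) * clampf (g i) (?e (yidx i) p - ?e (xidx (Suc i)) p))"
      unfolding good_def
    proof (intro conjI exI ballI)
      show "(\<lambda>p. clampf (f i) (?e (yidx i) p - ?e (xidx i) p) * clampf (g i) (?e (yidx i) p - ?e (xidx (Suc i)) p)) \<in> borel_measurable (cube I)"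
        using m1 m2 by measurable
      fix p
      have r: "0 \<le> max 0 (min 1 z)" "max 0 (min 1 z) \<le> 1" for z::real by auto
      show "0 \<le> clampf (f i) (?e (yidx i) p - ?e (xidx i) p) * clampf (g i) (?e (yidx i) p - ?e (xidx (Suc i)) p)"
        unfolding clampf_def using mono(2)[OF sf(1) r] mono(2)[OF sf(2) r] by simp
      show "clampf (f i) (?e (yidx i) p - ?e (xidx i) p) * clampf (g i) (?e (yidx i) p - ?e (xidx (Suc i)) p) \<le> f i 1 * g i 1"
        unfolding clampf_def using mono[OF sf(1) r] mono[OF sf(2) r] mono(2)[OF sf(1), of 1 1] by (intro mult_mono) auto
    qed
    show "{p \<in> space (cube I). ?e (xidx i) p \<le> ?e (yidx i) p \<and> ?e (xidx (Suc i)) p \<le> ?e (yidx i) p} \<in> sets (cube I)"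
      using le_sets[OF idx(1) idx(2), of c] le_sets[OF idx(3) idx(2), of c] by (simp add: Collect_conj_eq[symmetric] sets.Int Int_def)
  qed
  then show ?thesis
  proof (rule good_cong)
    fix p assume p: "p \<in> space (cube I)"
    have r: "?e j p \<in> {0..1}" if "j \<in> I \<union> {v}" for j using coordu_range[OF p that c] .
    show "H p = saw_factor f g i (p(v:=c))"
      unfolding H_def saw_factor_def using r[OF idx(1)] r[OF idx(2)] r[OF idx(3)]
      by (auto simp: clampf_eq)
  qed
qed

lemma saw_deriv:
  assumes "saw_fun \<phi>" "0 < z" "z < 1"
  shows "DERIV \<phi> z :> vector_derivative \<phi> (at z within {0..1})"
proof -
  have "\<phi> differentiable (at z within {0..1})" using assms unfolding saw_fun_def by auto
  then have "(\<phi> has_vector_derivative vector_derivative \<phi> (at z within {0..1})) (at z within {0..1})"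
    by (simp add: vector_derivative_works)
  moreover have "at z within {0..1} = at z" using assms by (intro at_within_interior) auto
  ultimately show ?thesis by (simp add: has_real_derivative_iff_has_vector_derivative)
qed

lemma logconc_aux:
  fixes \<phi> :: "real \<Rightarrow> real"
  assumes sf: "saw_fun \<phi>" and cf: "convex_fun \<phi>"
    and ab: "0 \<le> a" "a \<le> b" "b \<le> d" "d \<le> c" "c \<le> 1" "b + d = a + c"
  shows "\<phi> a * \<phi> c \<le> \<phi> b * \<phi> d"
proof -
  have mono: "\<phi> x \<le> \<phi> y" if "0 \<le> x" "x \<le> y" "y \<le> 1" for x y
    using sf that unfolding saw_fun_def mono_on_def by auto
  have nn: "0 \<le> \<phi> x" if "0 \<le> x" "x \<le> 1" for x using sf that unfolding saw_fun_def by auto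
  show ?thesis
  proof (cases "\<phi> a = 0")
    case True then show ?thesis using nn ab by simp
  next
    case False
    then have pa: "0 < \<phi> a" using nn ab by force
    have pos: "0 < \<phi> x" if "a \<le> x" "x \<le> 1" for x using mono[of a x] pa that ab by auto
    show ?thesis
    proof (cases "a = b")
      case True then have "d = c" using ab by simp
      then show ?thesis using True by simp
    next
      case False
      then have ab': "a < b" "d < c" using ab by auto
      define h where "h = (\<lambda>x. ln (\<phi> x))"
      define D where "D = (\<lambda>x. vector_derivative \<phi> (at x within {0..1}))"
      have hd: "DERIV h z :> D z / \<phi> z" if "a < z" "z < 1" for z
        unfolding h_def D_def using that ab
        by (auto intro!: derivative_eq_intros saw_deriv[OF sf] pos)
      have hc: "continuous_on {x..y} h" if "a \<le> x" "y \<le> 1" for x y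
        unfolding h_def
      proof (rule continuous_on_ln)
        show "continuous_on {x..y} \<phi>" using that ab by (intro continuous_on_subset[OF saw_cont[OF sf]]) auto
        show "\<forall>z\<in>{x..y}. \<phi> z \<noteq> 0" using that pos by (metis atLeastAtMost_iff less_irrefl order_trans)
      qed
      obtain l1 z1 where z1: "a < z1" "z1 < b" "DERIV h z1 :> l1" "h b - h a = (b - a) * l1"
        using MVT[OF ab'(1) hc[of a b]] hd ab real_differentiable_def by (smt (verit))
      obtain l2 z2 where z2: "d < z2" "z2 < c" "DERIV h z2 :> l2" "h c - h d = (c - d) * l2"
        using MVT[OF ab'(2) hc[of d c]] hd ab real_differentiable_def by (smt (verit))
      have "l1 = D z1 / \<phi> z1" using DERIV_unique[OF z1(3) hd] z1 ab by auto
      moreover have "l2 = D z2 / \<phi> z2" using DERIV_unique[OF z2(3) hd] z2 ab by auto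
      ultimately have "l2 \<le> l1"
        using cf z1 z2 ab unfolding convex_fun_def D_def by auto
      moreover have "c - d = b - a" "0 \<le> b - a" using ab by auto
      ultimately have "h c - h d \<le> h b - h a" using z1(4) z2(4) by (metis mult_left_mono)
      then have "h a + h c \<le> h b + h d" by simp
      then have "exp (h a + h c) \<le> exp (h b + h d)" by simp
      then show ?thesis unfolding h_def exp_add using pos ab by simp
    qed
  qed
qed

lemma logconc:
  fixes \<phi> :: "real \<Rightarrow> real"
  assumes sf: "saw_fun \<phi>" and cf: "convex_fun \<phi>"
    and ab: "0 \<le> a" "a \<le> b" "a \<le> d" "b \<le> c" "d \<le> c" "c \<le> 1" "b + d = a + c"
  shows "\<phi> a * \<phi> c \<le> \<phi> b * \<phi> d"
proof (cases "b \<le> d")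
  case True then show ?thesis using logconc_aux[OF sf cf] ab by auto
next
  case False then show ?thesis using logconc_aux[OF sf cf, of a d b c] ab by (auto simp: mult.commute)
qed
lemma cube_factor:
  fixes a b :: "(nat \<Rightarrow> real) \<Rightarrow> real"
  assumes IJ: "I \<inter> J = {}" "finite I" "finite J"
    and int: "integrable (cube (I \<union> J)) (\<lambda>p. a p * b p)"
    and da: "\<And>p p'. (\<forall>i\<in>I. p i = p' i) \<Longrightarrow> a p = a p'"
    and db: "\<And>p p'. (\<forall>i\<in>J. p i = p' i) \<Longrightarrow> b p = b p'"
  shows "(\<integral>p. a p * b p \<partial>cube (I \<union> J)) = (\<integral>p. a p \<partial>cube I) * (\<integral>p. b p \<partial>cube J)"
proof -
  interpret product_sigma_finite "\<lambda>_. restrict_space lborel {0..1::real}" by (rule psf)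
  have "(\<integral>p. a p * b p \<partial>cube (I \<union> J)) =
     (\<integral>x. (\<integral>y. a (merge I J (x, y)) * b (merge I J (x, y)) \<partial>cube J) \<partial>cube I)"
    unfolding cube_def using product_integral_fold[OF IJ int[unfolded cube_def]] by simp
  also have "\<dots> = (\<integral>x. (\<integral>y. a x * b y \<partial>cube J) \<partial>cube I)"
  proof -
    have "a (merge I J (x, y)) = a x" for x y by (rule da) (auto simp: merge_def)
    moreover have "b (merge I J (x, y)) = b y" for x y using IJ(1) by (intro db) (auto simp: merge_def)
    ultimately show ?thesis by simp
  qed
  also have "\<dots> = (\<integral>x. a x * (\<integral>y. b y \<partial>cube J) \<partial>cube I)" by simp
  also have "\<dots> = (\<integral>p. a p \<partial>cube I) * (\<integral>p. b p \<partial>cube J)" by simp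
  finally show ?thesis .
qed

lemma tp2:
  fixes w k1 k2 :: "'a \<Rightarrow> real"
  assumes M: "finite_measure M"
    and meas[measurable]: "w \<in> borel_measurable M" "k1 \<in> borel_measurable M" "k2 \<in> borel_measurable M"
    and A[measurable]: "A \<in> sets M"
    and bw: "\<And>p. p \<in> space M \<Longrightarrow> 0 \<le> w p \<and> w p \<le> B"
    and b1: "\<And>p. p \<in> space M \<Longrightarrow> 0 \<le> k1 p \<and> k1 p \<le> B"
    and b2: "\<And>p. p \<in> space M \<Longrightarrow> 0 \<le> k2 p \<and> k2 p \<le> B"
    and tp: "\<And>p p'. p \<in> space M \<Longrightarrow> p' \<in> space M \<Longrightarrow> p \<in> A \<Longrightarrow> p' \<notin> A \<Longrightarrow>
               k2 p * k1 p' \<le> k1 p * k2 p'"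
  shows "(\<integral>p. (if p \<in> A then w p * k2 p else 0) \<partial>M) * (\<integral>p. w p * k1 p \<partial>M)
       \<le> (\<integral>p. (if p \<in> A then w p * k1 p else 0) \<partial>M) * (\<integral>p. w p * k2 p \<partial>M)"
proof -
  interpret finite_measure M by (rule M)
  have B0: "0 \<le> B" if "space M \<noteq> {}" using bw that by (meson order_trans ex_in_conv)
  have intg: "integrable M h" if "h \<in> borel_measurable M" "\<And>p. p \<in> space M \<Longrightarrow> \<bar>h p\<bar> \<le> C" for h :: "'a \<Rightarrow> real" and C :: real
    by (rule integrable_const_bound[where B=C]) (use that in auto)
  have prodb: "\<bar>w p * k p\<bar> \<le> B * B" if "p \<in> space M" "\<And>p. p \<in> space M \<Longrightarrow> 0 \<le> k p \<and> k p \<le> B" for p and k :: "'a \<Rightarrow> real"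
    using bw[OF that(1)] that(2)[OF that(1)] by (simp add: abs_mult mult_mono)
  define N1 where "N1 = (\<integral>p. (if p \<in> A then w p * k1 p else 0) \<partial>M)"
  define N2 where "N2 = (\<integral>p. (if p \<in> A then w p * k2 p else 0) \<partial>M)"
  define C1 where "C1 = (\<integral>p. (if p \<in> A then 0 else w p * k1 p) \<partial>M)"
  define C2 where "C2 = (\<integral>p. (if p \<in> A then 0 else w p * k2 p) \<partial>M)"
  have sp1: "(\<integral>p. w p * k1 p \<partial>M) = N1 + C1"
  proof -
    have "(\<integral>p. w p * k1 p \<partial>M) = (\<integral>p. (if p \<in> A then w p * k1 p else 0) + (if p \<in> A then 0 else w p * k1 p) \<partial>M)"
      by (rule Bochner_Integration.integral_cong) auto
    also have "\<dots> = N1 + C1" unfolding N1_def C1_def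
      by (rule Bochner_Integration.integral_add) (auto intro!: intg[where C="B*B"] prodb b1)
    finally show ?thesis .
  qed
  have sp2: "(\<integral>p. w p * k2 p \<partial>M) = N2 + C2"
  proof -
    have "(\<integral>p. w p * k2 p \<partial>M) = (\<integral>p. (if p \<in> A then w p * k2 p else 0) + (if p \<in> A then 0 else w p * k2 p) \<partial>M)"
      by (rule Bochner_Integration.integral_cong) auto
    also have "\<dots> = N2 + C2" unfolding N2_def C2_def
      by (rule Bochner_Integration.integral_add) (auto intro!: intg[where C="B*B"] prodb b2)
    finally show ?thesis .
  qed
  have key: "N2 * C1 \<le> N1 * C2"
  proof -
    have "N2 * C1 = (\<integral>p. (if p \<in> A then w p * (k2 p * C1) else 0) \<partial>M)"
      unfolding N2_def unfolding integral_mult_left_zero[symmetric] by (rule Bochner_Integration.integral_cong) auto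
    also have "\<dots> \<le> (\<integral>p. (if p \<in> A then w p * (k1 p * C2) else 0) \<partial>M)"
    proof (rule integral_mono)
      show "integrable M (\<lambda>p. if p \<in> A then w p * (k2 p * C1) else 0)"
        by (rule intg[where C="B*(B*\<bar>C1\<bar>)"]) (auto simp: abs_mult intro!: mult_mono dest: bw b2)
      show "integrable M (\<lambda>p. if p \<in> A then w p * (k1 p * C2) else 0)"
        by (rule intg[where C="B*(B*\<bar>C2\<bar>)"]) (auto simp: abs_mult intro!: mult_mono dest: bw b1)
      fix p assume p: "p \<in> space M"
      show "(if p \<in> A then w p * (k2 p * C1) else 0) \<le> (if p \<in> A then w p * (k1 p * C2) else 0)"
      proof (cases "p \<in> A")
        case True
        have "k2 p * C1 = (\<integral>p'. (if p' \<in> A then 0 else w p' * (k2 p * k1 p')) \<partial>M)"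
          unfolding C1_def unfolding integral_mult_right_zero[symmetric] by (rule Bochner_Integration.integral_cong) auto
        also have "\<dots> \<le> (\<integral>p'. (if p' \<in> A then 0 else w p' * (k1 p * k2 p')) \<partial>M)"
        proof (rule integral_mono)
          show "integrable M (\<lambda>p'. if p' \<in> A then 0 else w p' * (k2 p * k1 p'))"
            by (rule intg[where C="B*(B*B)"]) (use p in \<open>auto simp: abs_mult intro!: mult_mono dest: bw b2 b1\<close>)
          show "integrable M (\<lambda>p'. if p' \<in> A then 0 else w p' * (k1 p * k2 p'))"
            by (rule intg[where C="B*(B*B)"]) (use p in \<open>auto simp: abs_mult intro!: mult_mono dest: bw b2 b1\<close>)
          fix p' assume "p' \<in> space M"
          then show "(if p' \<in> A then 0 else w p' * (k2 p * k1 p')) \<le> (if p' \<in> A then 0 else w p' * (k1 p * k2 p'))"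
            using tp[OF p _ True] bw by (auto intro: mult_left_mono)
        qed
        also have "\<dots> = k1 p * C2"
          unfolding C2_def unfolding integral_mult_right_zero[symmetric] by (rule Bochner_Integration.integral_cong) auto
        finally show ?thesis using True bw[OF p] by (auto intro: mult_left_mono)
      qed simp
    qed
    also have "\<dots> = N1 * C2"
      unfolding N1_def unfolding integral_mult_left_zero[symmetric] by (rule Bochner_Integration.integral_cong) auto
    finally show ?thesis .
  qed
  show ?thesis unfolding sp1 sp2 N1_def[symmetric] N2_def[symmetric]
    using key by (simp add: algebra_simps)
qed
lemma tp2_good:
  assumes gw: "good I w" and g1: "good I k1" and g2: "good I k2"
    and A: "A \<in> sets (cube I)"
    and tp: "\<And>p p'. p \<in> space (cube I) \<Longrightarrow> p' \<in> space (cube I) \<Longrightarrow> p \<in> A \<Longrightarrow> p' \<notin> A \<Longrightarrow>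
               k2 p * k1 p' \<le> k1 p * k2 p'"
  shows "(\<integral>p. (if p \<in> A then w p * k2 p else 0) \<partial>cube I) * (\<integral>p. w p * k1 p \<partial>cube I)
       \<le> (\<integral>p. (if p \<in> A then w p * k1 p else 0) \<partial>cube I) * (\<integral>p. w p * k2 p \<partial>cube I)"
proof -
  obtain B1 B2 B3 where m: "w \<in> borel_measurable (cube I)" "k1 \<in> borel_measurable (cube I)" "k2 \<in> borel_measurable (cube I)"
    and b: "\<forall>p\<in>space (cube I). 0 \<le> w p \<and> w p \<le> B1" "\<forall>p\<in>space (cube I). 0 \<le> k1 p \<and> k1 p \<le> B2"
           "\<forall>p\<in>space (cube I). 0 \<le> k2 p \<and> k2 p \<le> B3"
    using gw g1 g2 unfolding good_def by metis
  let ?B = "\<bar>B1\<bar> + \<bar>B2\<bar> + \<bar>B3\<bar>"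
  interpret prob_space "cube I" by (rule cube_prob)
  show ?thesis
    by (rule tp2[where B="?B"]) (use m b A tp finite_measure_axioms in \<open>auto\<close>)
qed

lemma saw_factor_upd: "v \<noteq> xidx i \<Longrightarrow> v \<noteq> yidx i \<Longrightarrow> v \<noteq> xidx (Suc i) \<Longrightarrow>
   saw_factor f g i (q(v:=y)) = saw_factor f g i q"
  by (simp add: saw_factor_def)

lemma saw_factor_dep: "p (xidx i) = p' (xidx i) \<Longrightarrow> p (yidx i) = p' (yidx i) \<Longrightarrow> p (xidx (Suc i)) = p' (xidx (Suc i)) \<Longrightarrow>
   saw_factor f g i p = saw_factor f g i p'"
  by (simp add: saw_factor_def)

lemma factor_good0:
  assumes sf: "saw_fun (f i)" "saw_fun (g i)"
    and idx: "xidx i \<in> I" "yidx i \<in> I" "xidx (Suc i) \<in> I"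
  shows "good I (saw_factor f g i)"
proof -
  have "good I (\<lambda>p. saw_factor f g i (p(Suc (2*i) := 0)))"
    by (rule factor_good[of f i g, OF sf]) (use idx in auto)
  then show ?thesis
    by (rule good_cong) (simp add: saw_factor_upd xidx_def yidx_def)
qed

lemma half_good:
  assumes sf: "saw_fun \<phi>" and idx: "j \<in> I \<union> {v}" "k \<in> I \<union> {v}" and c: "c \<in> {0..1}"
  shows "good I (\<lambda>p. if (p(v:=c)) j \<le> (p(v:=c)) k then \<phi> ((p(v:=c)) k - (p(v:=c)) j) else 0)"
proof -
  let ?e = "\<lambda>j p. (p(v:=c)) j"
  have mono: "\<phi> x \<le> \<phi> y" "0 \<le> \<phi> x" if "0 \<le> x" "x \<le> y" "y \<le> 1" for x y
    using sf that unfolding saw_fun_def mono_on_def by auto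
  have "good I (\<lambda>p. if ?e j p \<le> ?e k p then clampf \<phi> (?e k p - ?e j p) else 0)"
  proof (rule good_if)
    show "good I (\<lambda>p. clampf \<phi> (?e k p - ?e j p))"
      unfolding good_def
    proof (intro conjI exI ballI)
      show "(\<lambda>p. clampf \<phi> (?e k p - ?e j p)) \<in> borel_measurable (cube I)"
        using clampf_meas[OF sf] coordu_meas[OF idx(1), of c] coordu_meas[OF idx(2), of c] by measurable
      fix p
      have r: "0 \<le> max 0 (min 1 z)" "max 0 (min 1 z) \<le> 1" for z::real by auto
      show "0 \<le> clampf \<phi> (?e k p - ?e j p)" unfolding clampf_def using mono(2)[OF r] by simp
      show "clampf \<phi> (?e k p - ?e j p) \<le> \<phi> 1" unfolding clampf_def using mono(1)[OF r] by simp
    qed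
    show "{p \<in> space (cube I). ?e j p \<le> ?e k p} \<in> sets (cube I)" by (rule le_sets[OF idx])
  qed
  then show ?thesis
  proof (rule good_cong)
    fix p assume p: "p \<in> space (cube I)"
    show "(if ?e j p \<le> ?e k p then clampf \<phi> (?e k p - ?e j p) else 0) = (if ?e j p \<le> ?e k p then \<phi> (?e k p - ?e j p) else 0)"
      using coordu_range[OF p idx(1) c] coordu_range[OF p idx(2) c] by (auto simp: clampf_eq)
  qed
qed

lemma coord_le_sets: "j \<in> I \<Longrightarrow> {p \<in> space (cube I). p j \<le> t} \<in> sets (cube I)"
  using coord_meas[of j I] by measurable

lemma good_if_coord: "good I h \<Longrightarrow> j \<in> I \<Longrightarrow> good I (\<lambda>p. if p j \<le> t then h p else 0)"
  by (rule good_if) (auto intro: coord_le_sets)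

lemma good_trunc_X:
  assumes fg: "\<forall>i\<in>{1..n}. saw_fun (f i) \<and> saw_fun (g i)" and s: "1 \<le> s" "s \<le> n"
    and L: "{..xidx s} \<subseteq> I"
  shows "good I (trunc_weight_X s f g)"
  unfolding trunc_weight_X_def
  by (rule good_prod) (use fg s L in \<open>auto intro!: factor_good0 simp: xidx_def yidx_def\<close>)
lemma frac_ineq:
  fixes N1 N2 D1 D2 :: real
  assumes "0 < D1" "0 < D2" "N1 * D2 \<le> N2 * D1"
  shows "N1 / D1 \<le> N2 / D2"
  using assms by (simp add: divide_simps)

lemma pos_prod_split:
  fixes x y :: real
  assumes "0 \<le> x" "0 \<le> y" "0 < x * y" shows "0 < x" "0 < y"
  using assms by (auto simp: zero_less_mult_iff)

lemma saw_nn: "saw_fun \<phi> \<Longrightarrow> 0 \<le> x \<Longrightarrow> x \<le> 1 \<Longrightarrow> 0 \<le> \<phi> x"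
  unfolding saw_fun_def by auto

lemma saw_mono: "saw_fun \<phi> \<Longrightarrow> 0 \<le> x \<Longrightarrow> x \<le> y \<Longrightarrow> y \<le> 1 \<Longrightarrow> \<phi> x \<le> \<phi> y"
  unfolding saw_fun_def mono_on_def by auto

lemma kx_tp:
  assumes sf: "saw_fun \<phi>" and cf: "convex_fun \<phi>"
    and xy: "0 \<le> x" "x < x'" "x' \<le> 1" "0 \<le> y1" "y1 \<le> y2" "y2 \<le> 1"
  shows "(if x \<le> y2 then \<phi> (y2 - x) else 0) * (if x' \<le> y1 then \<phi> (y1 - x') else 0)
       \<le> (if x \<le> y1 then \<phi> (y1 - x) else 0) * (if x' \<le> y2 then \<phi> (y2 - x') else 0)"
proof (cases "x' \<le> y1")
  case True
  then have "\<phi> (y1 - x') * \<phi> (y2 - x) \<le> \<phi> (y1 - x) * \<phi> (y2 - x')"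
    using xy by (intro logconc[OF sf cf]) auto
  then show ?thesis using True xy by (simp add: mult.commute)
next
  case False
  then show ?thesis using xy by (auto intro!: mult_nonneg_nonneg saw_nn[OF sf])
qed

lemma ky_tp:
  assumes sf: "saw_fun \<phi>" and cf: "convex_fun \<phi>"
    and xy: "0 \<le> y" "y < y'" "y' \<le> 1" "0 \<le> x1" "x1 \<le> x2" "x2 \<le> 1"
  shows "(if x2 \<le> y then \<phi> (y - x2) else 0) * (if x1 \<le> y' then \<phi> (y' - x1) else 0)
       \<le> (if x1 \<le> y then \<phi> (y - x1) else 0) * (if x2 \<le> y' then \<phi> (y' - x2) else 0)"
proof (cases "x2 \<le> y")
  case True
  then have "\<phi> (y - x2) * \<phi> (y' - x1) \<le> \<phi> (y - x1) * \<phi> (y' - x2)"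
    using xy by (intro logconc[OF sf cf]) auto
  then show ?thesis using True xy by simp
next
  case False
  then show ?thesis using xy by (auto intro!: mult_nonneg_nonneg saw_nn[OF sf])
qed

lemma partX:
  fixes n s :: nat and f g :: "nat \<Rightarrow> real \<Rightarrow> real" and t :: real
  assumes n: "1 \<le> n"
    and fg: "\<forall>i\<in>{1..n}. saw_fun (f i) \<and> saw_fun (g i)"
    and cvx: "\<forall>i\<in>{1..n}. convex_fun (f i) \<and> convex_fun (g i)"
    and s: "1 \<le> s" "s \<le> n"
    and t: "t \<in> {0..1}"
  shows
    "(\<forall>y1\<in>{0..1}. \<forall>y2\<in>{0..1}. y1 \<le> y2 \<longrightarrow>
        marg_dens (2*n) (saw_weight n f g) (yidx s) y1 > 0 \<longrightarrow>
        marg_dens (2*n) (saw_weight n f g) (yidx s) y2 > 0 \<longrightarrow>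
        cond_cdf (2*n) (saw_weight n f g) (xidx s) (yidx s) t y2
          \<le> cond_cdf (2*n) (saw_weight n f g) (xidx s) (yidx s) t y1)
   \<and> (\<forall>y\<in>{0..1}. marg_dens (2*n) (saw_weight n f g) (yidx s) y > 0 \<longrightarrow>
        cond_cdf (2*n) (saw_weight n f g) (xidx s) (yidx s) t y
          \<ge> model_cdf (xidx s) (trunc_weight_X s f g) (xidx s) t)"
proof -
  define a where "a = xidx s"
  define v where "v = yidx s"
  define L where "L = {..a}"
  define R where "R = {Suc v..2*n}"
  define TX where "TX = trunc_weight_X s f g"
  define KX where "KX = (\<lambda>x y. if x \<le> y then f s (y - x) else (0::real))"
  define BX where "BX = (\<lambda>y (q::nat \<Rightarrow> real). (if q (xidx (Suc s)) \<le> y then g s (y - q (xidx (Suc s))) else 0)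
                    * (\<Prod>i\<in>{Suc s..n}. saw_factor f g i q))"
  define W where "W = saw_weight n f g"
  have av: "a \<noteq> v" "xidx (Suc s) \<noteq> v" "xidx (Suc s) = Suc v" "v = Suc a" "Suc v \<le> 2*n"
    using s by (auto simp: a_def v_def xidx_def yidx_def)
  have D: "{..2*n} - {v} = L \<union> R" "L \<inter> R = {}" "finite L" "finite R"
    using s by (auto simp: L_def R_def a_def v_def xidx_def yidx_def)
  have sfs: "saw_fun (f s)" "saw_fun (g s)" "convex_fun (f s)" "convex_fun (g s)" using fg cvx s by auto
  have split: "W (q(v:=y)) = TX q * KX (q a) y * BX y q" for q y
  proof -
    have I: "{1..n} = {1..<s} \<union> insert s {Suc s..n}" using s by auto
    have p1: "(\<Prod>i\<in>{1..<s}. saw_factor f g i (q(v:=y))) = (\<Prod>i\<in>{1..<s}. saw_factor f g i q)"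
      by (rule prod.cong) (auto simp: v_def xidx_def yidx_def intro!: saw_factor_upd)
    have p2: "(\<Prod>i\<in>{Suc s..n}. saw_factor f g i (q(v:=y))) = (\<Prod>i\<in>{Suc s..n}. saw_factor f g i q)"
      using s by (intro prod.cong) (auto simp: v_def xidx_def yidx_def intro!: saw_factor_upd)
    have p3: "saw_factor f g s (q(v:=y)) = KX (q a) y * (if q (xidx (Suc s)) \<le> y then g s (y - q (xidx (Suc s))) else 0)"
      using av unfolding saw_factor_def KX_def by (auto simp: a_def v_def)
    have "W (q(v:=y)) = (\<Prod>i\<in>{1..<s}. saw_factor f g i (q(v:=y))) * (saw_factor f g s (q(v:=y)) * (\<Prod>i\<in>{Suc s..n}. saw_factor f g i (q(v:=y))))"
      unfolding W_def saw_weight_def I by (subst prod.union_disjoint) auto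
    then show ?thesis unfolding p1 p2 p3 by (simp add: TX_def trunc_weight_X_def BX_def mult_ac)
  qed
  have gTX: "good I TX" if "L \<subseteq> I" for I
    unfolding TX_def by (rule good_trunc_X[OF fg s]) (use that in \<open>simp add: L_def a_def\<close>)
  have gK: "good I (\<lambda>q. KX (q a) y)" if "a \<in> I" "y \<in> {0..1}" for I y
  proof -
    have "good I (\<lambda>p. if (p(v:=y)) a \<le> (p(v:=y)) v then f s ((p(v:=y)) v - (p(v:=y)) a) else 0)"
      by (rule half_good[OF sfs(1)]) (use that in auto)
    then show ?thesis by (rule good_cong) (use av in \<open>simp add: KX_def\<close>)
  qed
  have gB: "good I (BX y)" if "R \<subseteq> I" "y \<in> {0..1}" for I y
  proof -
    have "good I (\<lambda>p. if (p(v:=y)) (xidx (Suc s)) \<le> (p(v:=y)) v then g s ((p(v:=y)) v - (p(v:=y)) (xidx (Suc s))) else 0)"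
      by (rule half_good[OF sfs(2)]) (use that s av(3,5) in \<open>auto simp: R_def\<close>)
    moreover have "good I (\<lambda>q. \<Prod>i\<in>{Suc s..n}. saw_factor f g i q)"
    proof -
      have RI: "\<And>j. Suc v \<le> j \<Longrightarrow> j \<le> 2*n \<Longrightarrow> j \<in> I" using that(1) by (auto simp: R_def)
      show ?thesis
        by (rule good_prod) (use fg s in \<open>auto intro!: factor_good0 RI simp: v_def xidx_def yidx_def\<close>)
    qed
    ultimately have "good I (\<lambda>q. (if (q(v:=y)) (xidx (Suc s)) \<le> (q(v:=y)) v then g s ((q(v:=y)) v - (q(v:=y)) (xidx (Suc s))) else 0) * (\<Prod>i\<in>{Suc s..n}. saw_factor f g i q))"
      by (rule good_mult)
    then show ?thesis by (rule good_cong) (use av in \<open>simp add: BX_def\<close>)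
  qed
  have depTX: "TX q = TX q'" if "\<forall>i\<in>L. q i = q' i" for q q'
  proof -
    have LI: "\<And>j. j \<le> a \<Longrightarrow> q j = q' j" using that by (auto simp: L_def)
    show ?thesis unfolding TX_def trunc_weight_X_def
      by (rule prod.cong) (use s in \<open>auto intro!: saw_factor_dep LI simp: a_def xidx_def yidx_def\<close>)
  qed
  have depB: "BX y q = BX y q'" if "\<forall>i\<in>R. q i = q' i" for q q' y
  proof -
    have "(\<Prod>i\<in>{Suc s..n}. saw_factor f g i q) = (\<Prod>i\<in>{Suc s..n}. saw_factor f g i q')"
    proof -
      have RI: "\<And>j. Suc v \<le> j \<Longrightarrow> j \<le> 2*n \<Longrightarrow> q j = q' j" using that by (auto simp: R_def)
      show ?thesis
        by (rule prod.cong) (use s in \<open>auto intro!: saw_factor_dep RI simp: v_def xidx_def yidx_def\<close>)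
    qed
    moreover have "q (xidx (Suc s)) = q' (xidx (Suc s))" using that av s by (auto simp: R_def xidx_def)
    ultimately show ?thesis unfolding BX_def by simp
  qed
  have aL: "a \<in> L" by (simp add: L_def)
  define \<alpha> where "\<alpha> = (\<lambda>y q. TX q * KX (q a) y)"
  define \<alpha>t where "\<alpha>t = (\<lambda>y q. if q a \<le> t then TX q * KX (q a) y else 0)"
  have g\<alpha>: "good I (\<alpha> y)" if "L \<subseteq> I" "y \<in> {0..1}" for I y
    unfolding \<alpha>_def using that aL by (intro good_mult gTX gK) auto
  have g\<alpha>t: "good I (\<alpha>t y)" if "L \<subseteq> I" "y \<in> {0..1}" for I y
    unfolding \<alpha>t_def using that aL by (intro good_if_coord good_mult gTX gK) auto
  have marg: "marg_dens (2*n) W v y = (\<integral>q. \<alpha> y q \<partial>cube L) * (\<integral>q. BX y q \<partial>cube R)" if y: "y \<in> {0..1}" for y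
  proof -
    have "marg_dens (2*n) W v y = (\<integral>q. \<alpha> y q * BX y q \<partial>cube (L \<union> R))"
      unfolding marg_dens_def D(1) by (rule Bochner_Integration.integral_cong) (auto simp: split \<alpha>_def)
    also have "\<dots> = (\<integral>q. \<alpha> y q \<partial>cube L) * (\<integral>q. BX y q \<partial>cube R)"
    proof (rule cube_factor[OF D(2-4)])
      show "integrable (cube (L \<union> R)) (\<lambda>p. \<alpha> y p * BX y p)"
        using y by (intro good_integrable good_mult g\<alpha> gB) auto
      show "\<alpha> y p = \<alpha> y p'" if "\<forall>i\<in>L. p i = p' i" for p p'
        using that depTX[OF that] aL by (simp add: \<alpha>_def)
      show "BX y p = BX y p'" if "\<forall>i\<in>R. p i = p' i" for p p' by (rule depB[OF that])
    qed
    finally show ?thesis .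
  qed
  have num: "(\<integral>q. (if q a \<le> t then W (q(v:=y)) else 0) \<partial>cube ({..2*n} - {v}))
      = (\<integral>q. \<alpha>t y q \<partial>cube L) * (\<integral>q. BX y q \<partial>cube R)" if y: "y \<in> {0..1}" for y
  proof -
    have "(\<integral>q. (if q a \<le> t then W (q(v:=y)) else 0) \<partial>cube ({..2*n} - {v})) = (\<integral>q. \<alpha>t y q * BX y q \<partial>cube (L \<union> R))"
      unfolding D(1) by (rule Bochner_Integration.integral_cong) (auto simp: split \<alpha>t_def)
    also have "\<dots> = (\<integral>q. \<alpha>t y q \<partial>cube L) * (\<integral>q. BX y q \<partial>cube R)"
    proof (rule cube_factor[OF D(2-4)])
      show "integrable (cube (L \<union> R)) (\<lambda>p. \<alpha>t y p * BX y p)"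
        using y by (intro good_integrable good_mult g\<alpha>t gB) auto
      show "\<alpha>t y p = \<alpha>t y p'" if "\<forall>i\<in>L. p i = p' i" for p p'
        using that depTX[OF that] aL by (simp add: \<alpha>t_def)
      show "BX y p = BX y p'" if "\<forall>i\<in>R. p i = p' i" for p p' by (rule depB[OF that])
    qed
    finally show ?thesis .
  qed
  have cond: "cond_cdf (2*n) W a v t y = (\<integral>q. \<alpha>t y q \<partial>cube L) / (\<integral>q. \<alpha> y q \<partial>cube L)
      \<and> 0 < (\<integral>q. \<alpha> y q \<partial>cube L)"
    if y: "y \<in> {0..1}" and mp: "marg_dens (2*n) W v y > 0" for y
  proof -
    have pos: "0 < (\<integral>q. \<alpha> y q \<partial>cube L)" "0 < (\<integral>q. BX y q \<partial>cube R)"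
      using pos_prod_split[OF good_nonneg[OF g\<alpha>[OF _ y]] good_nonneg[OF gB[OF _ y]]] mp marg[OF y] by auto
    show ?thesis
      unfolding cond_cdf_def num[OF y] marg[OF y] using pos by simp
  qed
  define A where "A = {p \<in> space (cube L). p a \<le> t}"
  have A: "A \<in> sets (cube L)" unfolding A_def using aL by (rule coord_le_sets)
  have inA: "\<And>p. p \<in> space (cube L) \<Longrightarrow> p \<in> A \<longleftrightarrow> p a \<le> t" by (simp add: A_def)
  have rng: "\<And>p. p \<in> space (cube L) \<Longrightarrow> p a \<in> {0..1}" using aL by (auto simp: space_cube PiE_def Pi_def)
  have claim1: "cond_cdf (2*n) W a v t y2 \<le> cond_cdf (2*n) W a v t y1"
    if y: "y1 \<in> {0..1}" "y2 \<in> {0..1}" "y1 \<le> y2" and mp: "marg_dens (2*n) W v y1 > 0" "marg_dens (2*n) W v y2 > 0"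
    for y1 y2
  proof -
    have ineq: "(\<integral>p. (if p \<in> A then TX p * KX (p a) y2 else 0) \<partial>cube L) * (\<integral>p. TX p * KX (p a) y1 \<partial>cube L)
       \<le> (\<integral>p. (if p \<in> A then TX p * KX (p a) y1 else 0) \<partial>cube L) * (\<integral>p. TX p * KX (p a) y2 \<partial>cube L)"
    proof (rule tp2_good[OF gTX gK gK A])
      fix p p' assume p: "p \<in> space (cube L)" "p' \<in> space (cube L)" "p \<in> A" "p' \<notin> A"
      then have "p a \<le> t" "t < p' a" "p a \<in> {0..1}" "p' a \<in> {0..1}" using inA rng by force+
      then show "KX (p a) y2 * KX (p' a) y1 \<le> KX (p a) y1 * KX (p' a) y2"
        unfolding KX_def using y by (intro kx_tp[OF sfs(1) sfs(3)]) auto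
    qed (use aL y in auto)
    have e: "(\<integral>p. (if p \<in> A then TX p * KX (p a) y else 0) \<partial>cube L) = (\<integral>q. \<alpha>t y q \<partial>cube L)" for y
      unfolding \<alpha>t_def by (rule Bochner_Integration.integral_cong) (auto simp: inA)
    have e2: "(\<integral>p. TX p * KX (p a) y \<partial>cube L) = (\<integral>q. \<alpha> y q \<partial>cube L)" for y
      unfolding \<alpha>_def ..
    show ?thesis
      using cond[OF y(1) mp(1)] cond[OF y(2) mp(2)] ineq[unfolded e e2]
      by (simp add: frac_ineq)
  qed
  have claim3: "cond_cdf (2*n) W a v t y \<ge> model_cdf a TX a t"
    if y: "y \<in> {0..1}" and mp: "marg_dens (2*n) W v y > 0" for y
  proof -
    have ineq: "(\<integral>p. (if p \<in> A then TX p * 1 else 0) \<partial>cube L) * (\<integral>p. TX p * KX (p a) y \<partial>cube L)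
       \<le> (\<integral>p. (if p \<in> A then TX p * KX (p a) y else 0) \<partial>cube L) * (\<integral>p. TX p * 1 \<partial>cube L)"
    proof (rule tp2_good[OF gTX gK good_const A])
      fix p p' assume p: "p \<in> space (cube L)" "p' \<in> space (cube L)" "p \<in> A" "p' \<notin> A"
      then have "p a \<le> t" "t < p' a" "p a \<in> {0..1}" "p' a \<in> {0..1}" using inA rng by force+
      then show "1 * KX (p' a) y \<le> KX (p a) y * 1"
        unfolding KX_def using y by (auto intro!: saw_mono[OF sfs(1)] saw_nn[OF sfs(1)])
    qed (use aL y in auto)
    define N1 where "N1 = (\<integral>p. (if p a \<le> t then TX p else 0) \<partial>cube L)"
    define D1 where "D1 = (\<integral>p. TX p \<partial>cube L)"
    have e: "(\<integral>p. (if p \<in> A then TX p * KX (p a) y else 0) \<partial>cube L) = (\<integral>q. \<alpha>t y q \<partial>cube L)"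
      unfolding \<alpha>t_def by (rule Bochner_Integration.integral_cong) (auto simp: inA)
    have e1: "(\<integral>p. (if p \<in> A then TX p * 1 else 0) \<partial>cube L) = N1"
      unfolding N1_def by (rule Bochner_Integration.integral_cong) (auto simp: inA)
    have e2: "(\<integral>p. TX p * KX (p a) y \<partial>cube L) = (\<integral>q. \<alpha> y q \<partial>cube L)" unfolding \<alpha>_def ..
    have e3: "(\<integral>p. TX p * 1 \<partial>cube L) = D1" unfolding D1_def by simp
    have mc: "model_cdf a TX a t = N1 / D1" unfolding model_cdf_def N1_def D1_def L_def ..
    have D1: "0 \<le> D1" unfolding D1_def by (rule good_nonneg[OF gTX]) simp
    have Nt: "0 \<le> (\<integral>q. \<alpha>t y q \<partial>cube L)" by (rule good_nonneg[OF g\<alpha>t[OF _ y]]) simp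
    show ?thesis
    proof (cases "D1 = 0")
      case True then show ?thesis using mc cond[OF y mp] Nt by simp
    next
      case False
      then show ?thesis using D1 mc cond[OF y mp] ineq[unfolded e e1 e2 e3]
        by (simp add: frac_ineq)
    qed
  qed
  show ?thesis
    using claim1 claim3 unfolding W_def a_def v_def TX_def by blast
qed
lemma partY:
  fixes n s :: nat and f g :: "nat \<Rightarrow> real \<Rightarrow> real" and t :: real
  assumes n: "1 \<le> n"
    and fg: "\<forall>i\<in>{1..n}. saw_fun (f i) \<and> saw_fun (g i)"
    and cvx: "\<forall>i\<in>{1..n}. convex_fun (f i) \<and> convex_fun (g i)"
    and s: "1 \<le> s" "s \<le> n"
    and t: "t \<in> {0..1}"
  shows
    "(\<forall>x1\<in>{0..1}. \<forall>x2\<in>{0..1}. x1 \<le> x2 \<longrightarrow>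
        marg_dens (2*n) (saw_weight n f g) (xidx (Suc s)) x1 > 0 \<longrightarrow>
        marg_dens (2*n) (saw_weight n f g) (xidx (Suc s)) x2 > 0 \<longrightarrow>
        cond_cdf (2*n) (saw_weight n f g) (yidx s) (xidx (Suc s)) t x2
          \<le> cond_cdf (2*n) (saw_weight n f g) (yidx s) (xidx (Suc s)) t x1)
   \<and> (\<forall>x\<in>{0..1}. marg_dens (2*n) (saw_weight n f g) (xidx (Suc s)) x > 0 \<longrightarrow>
        cond_cdf (2*n) (saw_weight n f g) (yidx s) (xidx (Suc s)) t x
          \<le> model_cdf (yidx s) (trunc_weight_Y s f g) (yidx s) t)"
proof -
  define a where "a = xidx s"
  define u where "u = yidx s"
  define v where "v = xidx (Suc s)"
  define L where "L = {..u}"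
  define R where "R = {Suc v..2*n}"
  define TY where "TY = trunc_weight_Y s f g"
  define KY where "KY = (\<lambda>y x. if x \<le> y then g s (y - x) else (0::real))"
  define BY where "BY = (\<lambda>x (q::nat \<Rightarrow> real). \<Prod>i\<in>{Suc s..n}. saw_factor f g i (q(v:=x)))"
  define W where "W = saw_weight n f g"
  have av: "a \<noteq> v" "u \<noteq> v" "v = Suc u" "u = Suc a" "v \<le> 2*n"
    using s by (auto simp: a_def u_def v_def xidx_def yidx_def)
  have D: "{..2*n} - {v} = L \<union> R" "L \<inter> R = {}" "finite L" "finite R"
    using s by (auto simp: L_def R_def u_def v_def xidx_def yidx_def)
  have sfs: "saw_fun (f s)" "saw_fun (g s)" "convex_fun (f s)" "convex_fun (g s)" using fg cvx s by auto
  have TYe: "TY q = trunc_weight_X s f g q * (if q a \<le> q u then f s (q u - q a) else 0)" for q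
    unfolding TY_def trunc_weight_Y_def trunc_weight_X_def a_def u_def ..
  have split: "W (q(v:=x)) = TY q * KY (q u) x * BY x q" for q x
  proof -
    have I: "{1..n} = {1..<s} \<union> insert s {Suc s..n}" using s by auto
    have p1: "(\<Prod>i\<in>{1..<s}. saw_factor f g i (q(v:=x))) = (\<Prod>i\<in>{1..<s}. saw_factor f g i q)"
      using s by (intro prod.cong) (auto simp: v_def xidx_def yidx_def intro!: saw_factor_upd)
    have p3: "saw_factor f g s (q(v:=x)) = (if q a \<le> q u then f s (q u - q a) else 0) * KY (q u) x"
      using av unfolding saw_factor_def KY_def by (auto simp: a_def u_def v_def)
    have "W (q(v:=x)) = (\<Prod>i\<in>{1..<s}. saw_factor f g i (q(v:=x))) * (saw_factor f g s (q(v:=x)) * (\<Prod>i\<in>{Suc s..n}. saw_factor f g i (q(v:=x))))"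
      unfolding W_def saw_weight_def I by (subst prod.union_disjoint) auto
    then show ?thesis unfolding p1 p3 TYe by (simp add: trunc_weight_X_def BY_def mult_ac)
  qed
  have gTY: "good I TY" if "L \<subseteq> I" for I
  proof -
    have "good I (trunc_weight_X s f g)"
      by (rule good_trunc_X[OF fg s]) (use that av in \<open>auto simp: L_def a_def u_def\<close>)
    moreover have "good I (\<lambda>p. if (p(v:=0)) a \<le> (p(v:=0)) u then f s ((p(v:=0)) u - (p(v:=0)) a) else 0)"
      by (rule half_good[OF sfs(1)]) (use that av in \<open>auto simp: L_def\<close>)
    ultimately have "good I (\<lambda>p. trunc_weight_X s f g p * (if (p(v:=0)) a \<le> (p(v:=0)) u then f s ((p(v:=0)) u - (p(v:=0)) a) else 0))"
      by (rule good_mult)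
    then show ?thesis by (rule good_cong) (use av in \<open>simp add: TYe\<close>)
  qed
  have gK: "good I (\<lambda>q. KY (q u) x)" if "u \<in> I" "x \<in> {0..1}" for I x
  proof -
    have "good I (\<lambda>p. if (p(v:=x)) v \<le> (p(v:=x)) u then g s ((p(v:=x)) u - (p(v:=x)) v) else 0)"
      by (rule half_good[OF sfs(2)]) (use that in auto)
    then show ?thesis by (rule good_cong) (use av in \<open>simp add: KY_def\<close>)
  qed
  have gB: "good I (BY x)" if "R \<subseteq> I" "x \<in> {0..1}" for I x
  proof -
    have RI: "\<And>j. Suc v \<le> j \<Longrightarrow> j \<le> 2*n \<Longrightarrow> j \<in> I" using that(1) by (auto simp: R_def)
    have RI': "\<And>j. v \<le> j \<Longrightarrow> j \<le> 2*n \<Longrightarrow> j \<in> I \<union> {v}" using RI by (metis Un_iff le_antisym not_less_eq_eq singletonI)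
    show ?thesis unfolding BY_def
      by (rule good_prod) (use fg s that in \<open>auto intro!: factor_good RI RI' simp: v_def xidx_def yidx_def\<close>)
  qed
  have depTY: "TY q = TY q'" if "\<forall>i\<in>L. q i = q' i" for q q'
  proof -
    have LI: "\<And>j. j \<le> u \<Longrightarrow> q j = q' j" using that by (auto simp: L_def)
    have "trunc_weight_X s f g q = trunc_weight_X s f g q'" unfolding trunc_weight_X_def
      by (rule prod.cong) (use s in \<open>auto intro!: saw_factor_dep LI simp: u_def xidx_def yidx_def\<close>)
    moreover have "q a = q' a" "q u = q' u" using LI av by auto
    ultimately show ?thesis unfolding TYe by simp
  qed
  have depB: "BY x q = BY x q'" if "\<forall>i\<in>R. q i = q' i" for q q' x
  proof -
    have RI: "\<And>j. v \<le> j \<Longrightarrow> j \<le> 2*n \<Longrightarrow> (q(v:=x)) j = (q'(v:=x)) j" using that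
      by (auto simp: R_def)
    have RI0: "\<And>j. Suc v \<le> j \<Longrightarrow> j \<le> 2*n \<Longrightarrow> q j = q' j" using that by (auto simp: R_def)
    show ?thesis unfolding BY_def
      by (rule prod.cong) (use s in \<open>auto intro!: saw_factor_dep RI0 simp: v_def xidx_def yidx_def\<close>)
  qed
  have uL: "u \<in> L" by (simp add: L_def)
  define \<alpha> where "\<alpha> = (\<lambda>x q. TY q * KY (q u) x)"
  define \<alpha>t where "\<alpha>t = (\<lambda>x q. if q u \<le> t then TY q * KY (q u) x else 0)"
  have g\<alpha>: "good I (\<alpha> x)" if "L \<subseteq> I" "x \<in> {0..1}" for I x
    unfolding \<alpha>_def using that uL by (intro good_mult gTY gK) auto
  have g\<alpha>t: "good I (\<alpha>t x)" if "L \<subseteq> I" "x \<in> {0..1}" for I x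
    unfolding \<alpha>t_def using that uL by (intro good_if_coord good_mult gTY gK) auto
  have marg: "marg_dens (2*n) W v x = (\<integral>q. \<alpha> x q \<partial>cube L) * (\<integral>q. BY x q \<partial>cube R)" if y: "x \<in> {0..1}" for x
  proof -
    have "marg_dens (2*n) W v x = (\<integral>q. \<alpha> x q * BY x q \<partial>cube (L \<union> R))"
      unfolding marg_dens_def D(1) by (rule Bochner_Integration.integral_cong) (auto simp: split \<alpha>_def)
    also have "\<dots> = (\<integral>q. \<alpha> x q \<partial>cube L) * (\<integral>q. BY x q \<partial>cube R)"
    proof (rule cube_factor[OF D(2-4)])
      show "integrable (cube (L \<union> R)) (\<lambda>p. \<alpha> x p * BY x p)"
        using y by (intro good_integrable good_mult g\<alpha> gB) auto
      show "\<alpha> x p = \<alpha> x p'" if "\<forall>i\<in>L. p i = p' i" for p p'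
        using that depTY[OF that] uL by (simp add: \<alpha>_def)
      show "BY x p = BY x p'" if "\<forall>i\<in>R. p i = p' i" for p p' by (rule depB[OF that])
    qed
    finally show ?thesis .
  qed
  have num: "(\<integral>q. (if q u \<le> t then W (q(v:=x)) else 0) \<partial>cube ({..2*n} - {v}))
      = (\<integral>q. \<alpha>t x q \<partial>cube L) * (\<integral>q. BY x q \<partial>cube R)" if y: "x \<in> {0..1}" for x
  proof -
    have "(\<integral>q. (if q u \<le> t then W (q(v:=x)) else 0) \<partial>cube ({..2*n} - {v})) = (\<integral>q. \<alpha>t x q * BY x q \<partial>cube (L \<union> R))"
      unfolding D(1) by (rule Bochner_Integration.integral_cong) (auto simp: split \<alpha>t_def)
    also have "\<dots> = (\<integral>q. \<alpha>t x q \<partial>cube L) * (\<integral>q. BY x q \<partial>cube R)"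
    proof (rule cube_factor[OF D(2-4)])
      show "integrable (cube (L \<union> R)) (\<lambda>p. \<alpha>t x p * BY x p)"
        using y by (intro good_integrable good_mult g\<alpha>t gB) auto
      show "\<alpha>t x p = \<alpha>t x p'" if "\<forall>i\<in>L. p i = p' i" for p p'
        using that depTY[OF that] uL by (simp add: \<alpha>t_def)
      show "BY x p = BY x p'" if "\<forall>i\<in>R. p i = p' i" for p p' by (rule depB[OF that])
    qed
    finally show ?thesis .
  qed
  have cond: "cond_cdf (2*n) W u v t x = (\<integral>q. \<alpha>t x q \<partial>cube L) / (\<integral>q. \<alpha> x q \<partial>cube L)
      \<and> 0 < (\<integral>q. \<alpha> x q \<partial>cube L)"
    if y: "x \<in> {0..1}" and mp: "marg_dens (2*n) W v x > 0" for x
  proof -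
    have pos: "0 < (\<integral>q. \<alpha> x q \<partial>cube L)" "0 < (\<integral>q. BY x q \<partial>cube R)"
      using pos_prod_split[OF good_nonneg[OF g\<alpha>[OF _ y]] good_nonneg[OF gB[OF _ y]]] mp marg[OF y] by auto
    show ?thesis
      unfolding cond_cdf_def num[OF y] marg[OF y] using pos by simp
  qed
  define A where "A = {p \<in> space (cube L). p u \<le> t}"
  have A: "A \<in> sets (cube L)" unfolding A_def using uL by (rule coord_le_sets)
  have inA: "\<And>p. p \<in> space (cube L) \<Longrightarrow> p \<in> A \<longleftrightarrow> p u \<le> t" by (simp add: A_def)
  have rng: "\<And>p. p \<in> space (cube L) \<Longrightarrow> p u \<in> {0..1}" using uL by (auto simp: space_cube PiE_def Pi_def)
  have claim2: "cond_cdf (2*n) W u v t x2 \<le> cond_cdf (2*n) W u v t x1"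
    if y: "x1 \<in> {0..1}" "x2 \<in> {0..1}" "x1 \<le> x2" and mp: "marg_dens (2*n) W v x1 > 0" "marg_dens (2*n) W v x2 > 0"
    for x1 x2
  proof -
    have ineq: "(\<integral>p. (if p \<in> A then TY p * KY (p u) x2 else 0) \<partial>cube L) * (\<integral>p. TY p * KY (p u) x1 \<partial>cube L)
       \<le> (\<integral>p. (if p \<in> A then TY p * KY (p u) x1 else 0) \<partial>cube L) * (\<integral>p. TY p * KY (p u) x2 \<partial>cube L)"
    proof (rule tp2_good[OF gTY gK gK A])
      fix p p' assume p: "p \<in> space (cube L)" "p' \<in> space (cube L)" "p \<in> A" "p' \<notin> A"
      then have "p u \<le> t" "t < p' u" "p u \<in> {0..1}" "p' u \<in> {0..1}" using inA rng by force+
      then show "KY (p u) x2 * KY (p' u) x1 \<le> KY (p u) x1 * KY (p' u) x2"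
        unfolding KY_def using y by (intro ky_tp[OF sfs(2) sfs(4)]) auto
    qed (use uL y in auto)
    have e: "(\<integral>p. (if p \<in> A then TY p * KY (p u) x else 0) \<partial>cube L) = (\<integral>q. \<alpha>t x q \<partial>cube L)" for x
      unfolding \<alpha>t_def by (rule Bochner_Integration.integral_cong) (auto simp: inA)
    have e2: "(\<integral>p. TY p * KY (p u) x \<partial>cube L) = (\<integral>q. \<alpha> x q \<partial>cube L)" for x
      unfolding \<alpha>_def ..
    show ?thesis
      using cond[OF y(1) mp(1)] cond[OF y(2) mp(2)] ineq[unfolded e e2]
      by (simp add: frac_ineq)
  qed
  have claim4: "cond_cdf (2*n) W u v t x \<le> model_cdf u TY u t"
    if y: "x \<in> {0..1}" and mp: "marg_dens (2*n) W v x > 0" for x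
  proof -
    have ineq: "(\<integral>p. (if p \<in> A then TY p * KY (p u) x else 0) \<partial>cube L) * (\<integral>p. TY p * 1 \<partial>cube L)
       \<le> (\<integral>p. (if p \<in> A then TY p * 1 else 0) \<partial>cube L) * (\<integral>p. TY p * KY (p u) x \<partial>cube L)"
    proof (rule tp2_good[OF gTY good_const gK A])
      fix p p' assume p: "p \<in> space (cube L)" "p' \<in> space (cube L)" "p \<in> A" "p' \<notin> A"
      then have "p u \<le> t" "t < p' u" "p u \<in> {0..1}" "p' u \<in> {0..1}" using inA rng by force+
      then show "KY (p u) x * 1 \<le> 1 * KY (p' u) x"
        unfolding KY_def using y by (auto intro!: saw_mono[OF sfs(2)] saw_nn[OF sfs(2)])
    qed (use uL y in auto)
    define N1 where "N1 = (\<integral>p. (if p u \<le> t then TY p else 0) \<partial>cube L)"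
    define D1 where "D1 = (\<integral>p. TY p \<partial>cube L)"
    have e: "(\<integral>p. (if p \<in> A then TY p * KY (p u) x else 0) \<partial>cube L) = (\<integral>q. \<alpha>t x q \<partial>cube L)"
      unfolding \<alpha>t_def by (rule Bochner_Integration.integral_cong) (auto simp: inA)
    have e1: "(\<integral>p. (if p \<in> A then TY p * 1 else 0) \<partial>cube L) = N1"
      unfolding N1_def by (rule Bochner_Integration.integral_cong) (auto simp: inA)
    have e2: "(\<integral>p. TY p * KY (p u) x \<partial>cube L) = (\<integral>q. \<alpha> x q \<partial>cube L)" unfolding \<alpha>_def ..
    have e3: "(\<integral>p. TY p * 1 \<partial>cube L) = D1" unfolding D1_def by simp
    have mc: "model_cdf u TY u t = N1 / D1" unfolding model_cdf_def N1_def D1_def L_def ..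
    have D1: "0 \<le> D1" unfolding D1_def by (rule good_nonneg[OF gTY]) simp
    have bnd: "(\<integral>q. \<alpha> x q \<partial>cube L) \<le> g s 1 * D1"
    proof -
      have "(\<integral>q. \<alpha> x q \<partial>cube L) \<le> (\<integral>q. TY q * g s 1 \<partial>cube L)"
      proof (rule integral_mono)
        show "integrable (cube L) (\<alpha> x)" by (rule good_integrable[OF g\<alpha>[OF _ y]]) simp
        show "integrable (cube L) (\<lambda>q. TY q * g s 1)"
          by (rule good_integrable[OF good_mult[OF gTY good_const]]) (auto intro: saw_nn[OF sfs(2)])
        fix q assume q: "q \<in> space (cube L)"
        have "0 \<le> TY q" using gTY[of L] q unfolding good_def by auto
        moreover have "KY (q u) x \<le> g s 1" using rng[OF q] y
          unfolding KY_def by (auto intro!: saw_mono[OF sfs(2)] saw_nn[OF sfs(2)])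
        ultimately show "\<alpha> x q \<le> TY q * g s 1" unfolding \<alpha>_def by (simp add: mult_left_mono)
      qed
      also have "\<dots> = g s 1 * D1" unfolding D1_def by simp
      finally show ?thesis .
    qed
    show ?thesis
    proof (cases "D1 = 0")
      case True then show ?thesis using bnd cond[OF y mp] by simp
    next
      case False
      then show ?thesis using D1 mc cond[OF y mp] ineq[unfolded e e1 e2 e3]
        by (simp add: frac_ineq)
    qed
  qed
  show ?thesis
    using claim2 claim4 unfolding W_def u_def v_def TY_def by blast
qed
theorem mainTheorem5:
  fixes n s :: nat and f g :: "nat \<Rightarrow> real \<Rightarrow> real" and t :: real
  assumes n: "1 \<le> n"
    and fg: "\<forall>i\<in>{1..n}. saw_fun (f i) \<and> saw_fun (g i)"
    and cvx: "\<forall>i\<in>{1..n}. convex_fun (f i) \<and> convex_fun (g i)"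
    and s: "1 \<le> s" "s \<le> n"
    and t: "t \<in> {0..1}"
  shows
    "(\<forall>y1\<in>{0..1}. \<forall>y2\<in>{0..1}. y1 \<le> y2 \<longrightarrow>
        marg_dens (2*n) (saw_weight n f g) (yidx s) y1 > 0 \<longrightarrow>
        marg_dens (2*n) (saw_weight n f g) (yidx s) y2 > 0 \<longrightarrow>
        cond_cdf (2*n) (saw_weight n f g) (xidx s) (yidx s) t y2
          \<le> cond_cdf (2*n) (saw_weight n f g) (xidx s) (yidx s) t y1)
   \<and> (\<forall>x1\<in>{0..1}. \<forall>x2\<in>{0..1}. x1 \<le> x2 \<longrightarrow>
        marg_dens (2*n) (saw_weight n f g) (xidx (Suc s)) x1 > 0 \<longrightarrow>
        marg_dens (2*n) (saw_weight n f g) (xidx (Suc s)) x2 > 0 \<longrightarrow>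
        cond_cdf (2*n) (saw_weight n f g) (yidx s) (xidx (Suc s)) t x2
          \<le> cond_cdf (2*n) (saw_weight n f g) (yidx s) (xidx (Suc s)) t x1)
   \<and> (\<forall>y\<in>{0..1}. marg_dens (2*n) (saw_weight n f g) (yidx s) y > 0 \<longrightarrow>
        cond_cdf (2*n) (saw_weight n f g) (xidx s) (yidx s) t y
          \<ge> model_cdf (xidx s) (trunc_weight_X s f g) (xidx s) t)
   \<and> (\<forall>x\<in>{0..1}. marg_dens (2*n) (saw_weight n f g) (xidx (Suc s)) x > 0 \<longrightarrow>
        cond_cdf (2*n) (saw_weight n f g) (yidx s) (xidx (Suc s)) t x
          \<le> model_cdf (yidx s) (trunc_weight_Y s f g) (yidx s) t)"
  using partX[OF n fg cvx s t] partY[OF n fg cvx s t] by blast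

end
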